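(* Assume Assumptions 1, 2, 3 and 4 (stated in the context) hold. Then for every $a_1,a_2\in\{1,\dots,r\}$ and every closed bounded interval $[\lambda_l,\lambda_u]\subset\mathbb R$, $$\sup_{\lambda\in[\lambda_l,\lambda_u]}\Big|E\big[\widehat\phi_{a_1a_2}(\lambda)\big]-\phi_{a_1a_2}(\lambda)\Big|\longrightarrow 0\quad (n\to\infty),$$ i.e. the bias of $\widehat\phi_{a_1a_2}$ tends to zero uniformly over any closed and finite interval.
   Context: Let $\mathbf X=\{(X_1(t),\dots,X_r(t)):t\in\mathbb R\}$ be a real-valued, zero-mean, mean-square continuous, stationary vector process. For $a,b\in\{1,\dots,r\}$ let $C_{ab}(\tau)=E[X_a(t+\tau)X_b(t)]$ and $\phi_{ab}(\lambda)=\frac{1}{2\pi}\int_{-\infty}^\infty C_{ab}(t)e^{-it\lambda}\,dt$. Given a kernel $K:\mathbb R\to\mathbb R$, bandwidths $b_n>0$ and sampling rates $\rho_n>0$, the estimator based on the $n$ samples $\mathbf X(t/\rho_n)$, $t=1,\dots,n$, is $$\widehat\phi_{ab}(\lambda)=\frac{1}{2\pi n\rho_n}\sum_{t_1=1}^n\sum_{t_2=1}^n K(b_n(t_1-t_2))X_a\!\left(\tfrac{t_1}{\rho_n}\right)X_b\!\left(\tfrac{t_2}{\rho_n}\right)e^{-i(t_1-t_2)\lambda/\rho_n}\,1_{[-\pi\rho_n,\pi\rho_n]}(\lambda).$$ Assumption 1: for all $a,b$, the function $g_{ab}(t)=\sup_{|s|\ge|t|}|C_{ab}(s)|$ is integrable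 over $\mathbb R$. Assumption 2: $K$ is continuous, even, square integrable, $K(0)=1$, and $|K|\le K_1$ for some non-negative, even, integrable function $K_1$ having a unique maximum at $0$. Assumption 3: $nb_n\to\infty$ as $n\to\infty$. Assumption 4: $\rho_n\to\infty$ and $\rho_nb_n\to0$ as $n\to\infty$. *)

theory Defs
  imports "HOL-Probability.Probability"
begin

text \<open>A real vector process indexed by components a in {1..r} and times t :: real,
  modelled as random variables X a t on a probability space M.\<close>

definition cross_cov :: "'w measure \<Rightarrow> (nat \<Rightarrow> real \<Rightarrow> 'w \<Rightarrow> real) \<Rightarrow> nat \<Rightarrow> nat \<Rightarrow> real \<Rightarrow> real" where
  "cross_cov M X a b \<tau> = (\<integral>\<omega>. X a \<tau> \<omega> * X b 0 \<omega> \<partial>M)"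

definition stationary_process :: "'w measure \<Rightarrow> nat \<Rightarrow> (nat \<Rightarrow> real \<Rightarrow> 'w \<Rightarrow> real) \<Rightarrow> bool" where
  "stationary_process M r X \<longleftrightarrow>
     prob_space M \<and>
     (\<forall>a\<in>{1..r}. \<forall>t. X a t \<in> borel_measurable M \<and> integrable M (\<lambda>\<omega>. (X a t \<omega>)\<^sup>2)) \<and>
     (\<forall>a\<in>{1..r}. \<forall>t. (\<integral>\<omega>. X a t \<omega> \<partial>M) = 0) \<and>
     (\<forall>a\<in>{1..r}. \<forall>t. ((\<lambda>s. \<integral>\<omega>. (X a s \<omega> - X a t \<omega>)\<^sup>2 \<partial>M) \<longlongrightarrow> 0) (at t)) \<and>
     (\<forall>a\<in>{1..r}. \<forall>b\<in>{1..r}. \<forall>t \<tau>.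
        (\<integral>\<omega>. X a (t + \<tau>) \<omega> * X b t \<omega> \<partial>M) = cross_cov M X a b \<tau>)"

definition spec_density :: "(real \<Rightarrow> real) \<Rightarrow> real \<Rightarrow> complex" where
  "spec_density C lam = complex_of_real (1 / (2 * pi)) *
      (\<integral>t. complex_of_real (C t) * cis (- (t * lam)) \<partial>lborel)"

definition spec_estimator ::
  "(real \<Rightarrow> real) \<Rightarrow> real \<Rightarrow> real \<Rightarrow> nat \<Rightarrow> (nat \<Rightarrow> real \<Rightarrow> 'w \<Rightarrow> real) \<Rightarrow> nat \<Rightarrow> nat \<Rightarrow> real \<Rightarrow> 'w \<Rightarrow> complex" where
  "spec_estimator K bn \<rho> n X a b lam \<omega> =
     (if - pi * \<rho> \<le> lam \<and> lam \<le> pi * \<rho> then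
        complex_of_real (1 / (2 * pi * real n * \<rho>)) *
        (\<Sum>t1\<in>{1..n}. \<Sum>t2\<in>{1..n}.
           complex_of_real (K (bn * (real t1 - real t2)) * X a (real t1 / \<rho>) \<omega> * X b (real t2 / \<rho>) \<omega>)
           * cis (- ((real t1 - real t2) * lam / \<rho>)))
      else 0)"

definition assumption1 :: "nat \<Rightarrow> (nat \<Rightarrow> nat \<Rightarrow> real \<Rightarrow> real) \<Rightarrow> bool" where
  "assumption1 r C \<longleftrightarrow> (\<forall>a\<in>{1..r}. \<forall>b\<in>{1..r}.
      integrable lborel (\<lambda>t. SUP s\<in>{s. \<bar>s\<bar> \<ge> \<bar>t\<bar>}. \<bar>C a b s\<bar>))"

definition assumption2 :: "(real \<Rightarrow> real) \<Rightarrow> bool" where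
  "assumption2 K \<longleftrightarrow> continuous_on UNIV K \<and> (\<forall>x. K (- x) = K x) \<and>
      integrable lborel (\<lambda>x. (K x)\<^sup>2) \<and> K 0 = 1 \<and>
      (\<exists>K1. (\<forall>x. K1 x \<ge> 0) \<and> (\<forall>x. K1 (- x) = K1 x) \<and> integrable lborel K1 \<and>
            (\<forall>x. x \<noteq> 0 \<longrightarrow> K1 x < K1 0) \<and> (\<forall>x. \<bar>K x\<bar> \<le> K1 x))"

end

theory Submission
  imports Defs
begin

lemma card_diff_set:
  fixes N k :: int
  assumes "\<bar>k\<bar> \<le> N"
  shows "card {j\<in>{1..N}. 1 \<le> j + k \<and> j + k \<le> N} = nat (N - \<bar>k\<bar>)"
proof -
  have "{j\<in>{1..N}. 1 \<le> j + k \<and> j + k \<le> N} = {max 1 (1-k)..min N (N-k)}" by auto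
  moreover have "min N (N-k) - max 1 (1-k) + 1 = N - \<bar>k\<bar>" by (cases "k \<ge> 0") auto
  ultimately show ?thesis by simp
qed

lemma sum_diff_rearrange:
  fixes f :: "int \<Rightarrow> 'a::comm_ring_1"
  shows "(\<Sum>t1\<in>{1..n::nat}. \<Sum>t2\<in>{1..n}. f (int t1 - int t2))
       = (\<Sum>k\<in>{-int n..int n}. of_int (int n - \<bar>k\<bar>) * f k)"
proof -
  define N where "N = int n"
  have conv: "(\<Sum>t\<in>{1..n}. g (int t)) = (\<Sum>i\<in>{1..N}. g i)" for g :: "int \<Rightarrow> 'a"
  proof -
    have "{1..N} = int ` {1..n}" unfolding N_def by (simp add: image_int_atLeastAtMost)
    then show ?thesis by (simp add: sum.reindex)
  qed
  have "(\<Sum>t1\<in>{1..n::nat}. \<Sum>t2\<in>{1..n}. f (int t1 - int t2)) = (\<Sum>i\<in>{1..N}. \<Sum>j\<in>{1..N}. f (i - j))"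
    using conv[of "\<lambda>i. \<Sum>t2\<in>{1..n}. f (i - int t2)"] conv[of "\<lambda>j. f (_ - j)"] by simp
  also have "\<dots> = (\<Sum>j\<in>{1..N}. \<Sum>i\<in>{1..N}. f (i - j))" by (rule sum.swap)
  also have "\<dots> = (\<Sum>j\<in>{1..N}. \<Sum>k\<in>{-N..N}. if 1 \<le> j + k \<and> j + k \<le> N then f k else 0)"
  proof (rule sum.cong[OF refl])
    fix j assume j: "j \<in> {1..N}"
    have "(\<Sum>k\<in>{-N..N}. if 1 \<le> j + k \<and> j + k \<le> N then f k else 0)
         = (\<Sum>k\<in>{k\<in>{-N..N}. 1 \<le> j + k \<and> j + k \<le> N}. f k)"
      by (simp only: sum.inter_filter[OF finite_atLeastAtMost_int])
    also have "{k\<in>{-N..N}. 1 \<le> j + k \<and> j + k \<le> N} = (\<lambda>i. i - j) ` {1..N}"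
    proof
      show "(\<lambda>i. i - j) ` {1..N} \<subseteq> {k\<in>{-N..N}. 1 \<le> j + k \<and> j + k \<le> N}" using j by auto
      show "{k\<in>{-N..N}. 1 \<le> j + k \<and> j + k \<le> N} \<subseteq> (\<lambda>i. i - j) ` {1..N}"
      proof
        fix k assume "k \<in> {k\<in>{-N..N}. 1 \<le> j + k \<and> j + k \<le> N}"
        then show "k \<in> (\<lambda>i. i - j) ` {1..N}" by (intro image_eqI[of _ _ "j + k"]) auto
      qed
    qed
    also have "(\<Sum>k\<in>(\<lambda>i. i - j) ` {1..N}. f k) = (\<Sum>i\<in>{1..N}. f (i - j))"
      by (subst sum.reindex) (auto simp: inj_on_def)
    finally show "(\<Sum>i\<in>{1..N}. f (i - j)) = (\<Sum>k\<in>{-N..N}. if 1 \<le> j + k \<and> j + k \<le> N then f k else 0)" ..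
  qed
  also have "\<dots> = (\<Sum>k\<in>{-N..N}. \<Sum>j\<in>{1..N}. if 1 \<le> j + k \<and> j + k \<le> N then f k else 0)"
    by (rule sum.swap)
  also have "\<dots> = (\<Sum>k\<in>{-N..N}. of_int (N - \<bar>k\<bar>) * f k)"
  proof (rule sum.cong[OF refl])
    fix k assume k: "k \<in> {-N..N}"
    have "(\<Sum>j\<in>{1..N}. if 1 \<le> j + k \<and> j + k \<le> N then f k else 0)
        = (\<Sum>j\<in>{j\<in>{1..N}. 1 \<le> j + k \<and> j + k \<le> N}. f k)"
      by (simp only: sum.inter_filter[OF finite_atLeastAtMost_int])
    also have "\<dots> = of_nat (card {j\<in>{1..N}. 1 \<le> j + k \<and> j + k \<le> N}) * f k" by simp
    also have "\<dots> = of_int (N - \<bar>k\<bar>) * f k"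
    proof -
      have "\<bar>k\<bar> \<le> N" using k by auto
      then have "card {j\<in>{1..N}. 1 \<le> j + k \<and> j + k \<le> N} = nat (N - \<bar>k\<bar>)" by (rule card_diff_set)
      moreover have "(of_nat (nat (N - \<bar>k\<bar>)) :: 'a) = of_int (N - \<bar>k\<bar>)"
        using \<open>\<bar>k\<bar> \<le> N\<close> by (metis diff_ge_0_iff_ge of_nat_nat)
      ultimately show ?thesis by simp
    qed
    finally show "(\<Sum>j\<in>{1..N}. if 1 \<le> j + k \<and> j + k \<le> N then f k else 0) = of_int (N - \<bar>k\<bar>) * f k" .
  qed
  finally show ?thesis unfolding N_def .
qed

lemma proc_integrable:
  assumes proc: "stationary_process M r X" and a: "a \<in> {1..r}" and b: "b \<in> {1..r}"
  shows "integrable M (\<lambda>\<omega>. X a s \<omega> * X b t \<omega>)"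
proof (rule Bochner_Integration.integrable_bound)
  from proc a b have m1: "X a s \<in> borel_measurable M" and m2: "X b t \<in> borel_measurable M"
    and i1: "integrable M (\<lambda>\<omega>. (X a s \<omega>)\<^sup>2)" and i2: "integrable M (\<lambda>\<omega>. (X b t \<omega>)\<^sup>2)"
    unfolding stationary_process_def by auto
  show "integrable M (\<lambda>\<omega>. (X a s \<omega>)\<^sup>2 + (X b t \<omega>)\<^sup>2)" using i1 i2 by auto
  show "(\<lambda>\<omega>. X a s \<omega> * X b t \<omega>) \<in> borel_measurable M" using m1 m2 by auto
  show "AE \<omega> in M. norm (X a s \<omega> * X b t \<omega>) \<le> norm ((X a s \<omega>)\<^sup>2 + (X b t \<omega>)\<^sup>2)"
  proof (intro AE_I2)
    fix \<omega>
    have "\<bar>X a s \<omega> * X b t \<omega>\<bar> \<le> (X a s \<omega>)\<^sup>2 + (X b t \<omega>)\<^sup>2"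
    proof -
      have "0 \<le> (\<bar>X a s \<omega>\<bar> - \<bar>X b t \<omega>\<bar>)\<^sup>2" by simp
      then have "2 * (\<bar>X a s \<omega>\<bar> * \<bar>X b t \<omega>\<bar>) \<le> (X a s \<omega>)\<^sup>2 + (X b t \<omega>)\<^sup>2"
        by (simp add: power2_eq_square algebra_simps)
      moreover have "0 \<le> \<bar>X a s \<omega>\<bar> * \<bar>X b t \<omega>\<bar>" by simp
      moreover have "\<bar>X a s \<omega> * X b t \<omega>\<bar> = \<bar>X a s \<omega>\<bar> * \<bar>X b t \<omega>\<bar>" by (rule abs_mult)
      ultimately show ?thesis by linarith
    qed
    then show "norm (X a s \<omega> * X b t \<omega>) \<le> norm ((X a s \<omega>)\<^sup>2 + (X b t \<omega>)\<^sup>2)" by simp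
  qed
qed

lemma proc_cov:
  assumes proc: "stationary_process M r X" and a: "a \<in> {1..r}" and b: "b \<in> {1..r}"
  shows "(\<integral>\<omega>. X a s \<omega> * X b t \<omega> \<partial>M) = cross_cov M X a b (s - t)"
proof -
  have "(\<integral>\<omega>. X a (t + (s - t)) \<omega> * X b t \<omega> \<partial>M) = cross_cov M X a b (s - t)"
    using proc a b unfolding stationary_process_def by blast
  then show ?thesis by simp
qed

definition Tm :: "(real \<Rightarrow> real) \<Rightarrow> (real \<Rightarrow> real) \<Rightarrow> nat \<Rightarrow> real \<Rightarrow> real \<Rightarrow> real \<Rightarrow> int \<Rightarrow> complex" where
  "Tm K C n \<rho> bn lam k = complex_of_real ((1 - \<bar>real_of_int k\<bar> / real n) * K (bn * real_of_int k) * C (real_of_int k / \<rho>))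
      * cis (- (real_of_int k * lam / \<rho>))"

lemma expect_formula:
  assumes proc: "stationary_process M r X" and a1: "a1 \<in> {1..r}" and a2: "a2 \<in> {1..r}"
    and n: "n \<ge> 1" and rho: "\<rho> > 0" and lam: "- pi * \<rho> \<le> lam" "lam \<le> pi * \<rho>"
  shows "(\<integral>\<omega>. spec_estimator K bn \<rho> n X a1 a2 lam \<omega> \<partial>M)
      = complex_of_real (1 / (2 * pi * \<rho>)) * (\<Sum>k\<in>{-int n..int n}. Tm K (cross_cov M X a1 a2) n \<rho> bn lam k)"
proof -
  define C where "C = cross_cov M X a1 a2"
  define f where "f k = complex_of_real (K (bn * real_of_int k) * C (real_of_int k / \<rho>)) * cis (- (real_of_int k * lam / \<rho>))" for k :: int
  have integ: "integrable M (\<lambda>\<omega>. complex_of_real (K (bn * (real t1 - real t2)) * X a1 (real t1 / \<rho>) \<omega> * X a2 (real t2 / \<rho>) \<omega>)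
           * cis (- ((real t1 - real t2) * lam / \<rho>)))" for t1 t2 :: nat
  proof -
    have "integrable M (\<lambda>\<omega>. K (bn * (real t1 - real t2)) * (X a1 (real t1 / \<rho>) \<omega> * X a2 (real t2 / \<rho>) \<omega>))"
      using proc_integrable[OF proc a1 a2] by auto
    then have "integrable M (\<lambda>\<omega>. K (bn * (real t1 - real t2)) * X a1 (real t1 / \<rho>) \<omega> * X a2 (real t2 / \<rho>) \<omega>)"
      by (simp add: mult.assoc)
    then have "integrable M (\<lambda>\<omega>. complex_of_real (K (bn * (real t1 - real t2)) * X a1 (real t1 / \<rho>) \<omega> * X a2 (real t2 / \<rho>) \<omega>))"
      by (rule integrable_bounded_linear[OF bounded_linear_of_real])
    then show ?thesis by (rule integrable_mult_left)
  qed
  have term_eq: "(\<integral>\<omega>. complex_of_real (K (bn * (real t1 - real t2)) * X a1 (real t1 / \<rho>) \<omega> * X a2 (real t2 / \<rho>) \<omega>)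
           * cis (- ((real t1 - real t2) * lam / \<rho>)) \<partial>M) = f (int t1 - int t2)" for t1 t2 :: nat
  proof -
    have r: "(\<integral>\<omega>. K (bn * (real t1 - real t2)) * X a1 (real t1 / \<rho>) \<omega> * X a2 (real t2 / \<rho>) \<omega> \<partial>M)
        = K (bn * (real t1 - real t2)) * C (real t1 / \<rho> - real t2 / \<rho>)"
      using proc_cov[OF proc a1 a2] by (simp add: C_def mult.assoc)
    have "(\<integral>\<omega>. complex_of_real (K (bn * (real t1 - real t2)) * X a1 (real t1 / \<rho>) \<omega> * X a2 (real t2 / \<rho>) \<omega>)
           * cis (- ((real t1 - real t2) * lam / \<rho>)) \<partial>M)
        = (\<integral>\<omega>. complex_of_real (K (bn * (real t1 - real t2)) * X a1 (real t1 / \<rho>) \<omega> * X a2 (real t2 / \<rho>) \<omega>) \<partial>M)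
           * cis (- ((real t1 - real t2) * lam / \<rho>))"
      by (rule integral_mult_left_zero)
    also have "\<dots> = complex_of_real (K (bn * (real t1 - real t2)) * C (real t1 / \<rho> - real t2 / \<rho>)) * cis (- ((real t1 - real t2) * lam / \<rho>))"
      by (simp only: integral_complex_of_real r)
    also have "\<dots> = f (int t1 - int t2)"
      unfolding f_def by (simp add: diff_divide_distrib)
    finally show ?thesis .
  qed
  have "(\<integral>\<omega>. spec_estimator K bn \<rho> n X a1 a2 lam \<omega> \<partial>M)
     = complex_of_real (1 / (2 * pi * real n * \<rho>)) * (\<Sum>t1\<in>{1..n}. \<Sum>t2\<in>{1..n}. f (int t1 - int t2))"
  proof -
    define g where "g t1 t2 \<omega> = complex_of_real (K (bn * (real t1 - real t2)) * X a1 (real t1 / \<rho>) \<omega> * X a2 (real t2 / \<rho>) \<omega>)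
           * cis (- ((real t1 - real t2) * lam / \<rho>))" for t1 t2 :: nat and \<omega>
    have integ_g: "integrable M (g t1 t2)" for t1 t2 unfolding g_def by (rule integ)
    have eq: "(\<lambda>\<omega>. spec_estimator K bn \<rho> n X a1 a2 lam \<omega>) = (\<lambda>\<omega>. complex_of_real (1 / (2 * pi * real n * \<rho>)) * (\<Sum>t1\<in>{1..n}. \<Sum>t2\<in>{1..n}. g t1 t2 \<omega>))"
      by (rule ext) (simp only: spec_estimator_def if_P[OF conjI[OF lam]] g_def)
    have "(\<integral>\<omega>. (\<Sum>t1\<in>{1..n}. \<Sum>t2\<in>{1..n}. g t1 t2 \<omega>) \<partial>M) = (\<Sum>t1\<in>{1..n}. \<integral>\<omega>. (\<Sum>t2\<in>{1..n}. g t1 t2 \<omega>) \<partial>M)"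
      using integ_g by (simp add: integrable_sum)
    also have "\<dots> = (\<Sum>t1\<in>{1..n}. \<Sum>t2\<in>{1..n}. \<integral>\<omega>. g t1 t2 \<omega> \<partial>M)"
      using integ_g by simp
    also have "\<dots> = (\<Sum>t1\<in>{1..n}. \<Sum>t2\<in>{1..n}. f (int t1 - int t2))"
      unfolding g_def term_eq ..
    finally show ?thesis unfolding eq by (simp only: integral_mult_right_zero)
  qed
  also have "\<dots> = complex_of_real (1 / (2 * pi * real n * \<rho>)) * (\<Sum>k\<in>{-int n..int n}. of_int (int n - \<bar>k\<bar>) * f k)"
    by (simp only: sum_diff_rearrange)
  also have "\<dots> = complex_of_real (1 / (2 * pi * \<rho>)) * (\<Sum>k\<in>{-int n..int n}. Tm K C n \<rho> bn lam k)"
  proof -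
    have "of_int (int n - \<bar>k\<bar>) * f k = complex_of_real (real n) * Tm K C n \<rho> bn lam k" for k
    proof -
      have "real_of_int (int n - \<bar>k\<bar>) = real n * (1 - \<bar>real_of_int k\<bar> / real n)" using n by (simp add: field_simps)
      then have "(of_int (int n - \<bar>k\<bar>) :: complex) = complex_of_real (real n * (1 - \<bar>real_of_int k\<bar> / real n))"
        by (metis of_real_of_int_eq)
      then show ?thesis unfolding f_def Tm_def by (simp add: mult_ac)
    qed
    then have "(\<Sum>k\<in>{-int n..int n}. of_int (int n - \<bar>k\<bar>) * f k) = complex_of_real (real n) * (\<Sum>k\<in>{-int n..int n}. Tm K C n \<rho> bn lam k)"
      by (simp add: sum_distrib_left)
    then show ?thesis using n rho by (simp add: field_simps)
  qed
  finally show ?thesis unfolding C_def .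
qed

definition kap :: "real \<Rightarrow> real \<Rightarrow> int" where
  "kap \<rho> u = (if u > 0 then \<lceil>u * \<rho>\<rceil> else \<lfloor>u * \<rho>\<rfloor>)"

definition Iv :: "real \<Rightarrow> int \<Rightarrow> real set" where
  "Iv \<rho> k = (if k > 0 then {(real_of_int k - 1) / \<rho> <.. real_of_int k / \<rho>} else {real_of_int k / \<rho> ..< (real_of_int k + 1) / \<rho>})"

lemma Iv_iff:
  assumes rho: "\<rho> > 0" and k: "k \<noteq> 0"
  shows "u \<in> Iv \<rho> k \<longleftrightarrow> u \<noteq> 0 \<and> k = kap \<rho> u"
proof (cases "k > 0")
  case True
  have "u \<in> Iv \<rho> k \<longleftrightarrow> real_of_int k - 1 < u * \<rho> \<and> u * \<rho> \<le> real_of_int k"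
    using True rho by (simp add: Iv_def pos_divide_less_eq pos_le_divide_eq)
  also have "\<dots> \<longleftrightarrow> u \<noteq> 0 \<and> k = kap \<rho> u"
  proof
    assume h: "real_of_int k - 1 < u * \<rho> \<and> u * \<rho> \<le> real_of_int k"
    then have "u * \<rho> > 0" using True by (smt (verit) of_int_less_1_iff)
    then have "u > 0" using rho by (simp add: zero_less_mult_iff)
    moreover have "\<lceil>u * \<rho>\<rceil> = k" using h by (simp add: ceiling_eq_iff)
    ultimately show "u \<noteq> 0 \<and> k = kap \<rho> u" by (simp add: kap_def)
  next
    assume h: "u \<noteq> 0 \<and> k = kap \<rho> u"
    show "real_of_int k - 1 < u * \<rho> \<and> u * \<rho> \<le> real_of_int k"
    proof (cases "u > 0")
      case True then show ?thesis using h ceiling_eq_iff[of "u*\<rho>" "\<lceil>u*\<rho>\<rceil>"] by (simp add: kap_def)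
    next
      case False
      then have "u * \<rho> \<le> 0" using rho by (simp add: mult_nonpos_nonneg)
      then have "\<lfloor>u * \<rho>\<rfloor> \<le> 0" by linarith
      then show ?thesis using h False \<open>k > 0\<close> by (simp add: kap_def)
    qed
  qed
  finally show ?thesis .
next
  case False
  then have kneg: "k < 0" using k by simp
  have "u \<in> Iv \<rho> k \<longleftrightarrow> real_of_int k \<le> u * \<rho> \<and> u * \<rho> < real_of_int k + 1"
    using False rho by (simp add: Iv_def pos_divide_le_eq pos_less_divide_eq)
  also have "\<dots> \<longleftrightarrow> u \<noteq> 0 \<and> k = kap \<rho> u"
  proof
    assume h: "real_of_int k \<le> u * \<rho> \<and> u * \<rho> < real_of_int k + 1"
    moreover have "real_of_int k + 1 \<le> 0" using kneg
      by (metis add.commute int_less_real_le of_int_0 of_int_1)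
    ultimately have "u * \<rho> < 0" by linarith
    then have "u < 0" using rho by (simp add: mult_less_0_iff)
    moreover have "\<lfloor>u * \<rho>\<rfloor> = k" using h by (simp add: floor_eq_iff)
    ultimately show "u \<noteq> 0 \<and> k = kap \<rho> u" by (simp add: kap_def)
  next
    assume h: "u \<noteq> 0 \<and> k = kap \<rho> u"
    show "real_of_int k \<le> u * \<rho> \<and> u * \<rho> < real_of_int k + 1"
    proof (cases "u > 0")
      case False then show ?thesis using h floor_eq_iff[of "u*\<rho>" "\<lfloor>u*\<rho>\<rfloor>"] by (simp add: kap_def)
    next
      case True
      then have "u * \<rho> > 0" using rho by simp
      then have "\<lceil>u * \<rho>\<rceil> > 0" by linarith
      then show ?thesis using h True kneg by (simp add: kap_def)
    qed
  qed
  finally show ?thesis .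
qed

definition Gf :: "(real \<Rightarrow> real) \<Rightarrow> (real \<Rightarrow> real) \<Rightarrow> nat \<Rightarrow> real \<Rightarrow> real \<Rightarrow> real \<Rightarrow> real \<Rightarrow> complex" where
  "Gf K C n \<rho> bn lam u = (\<Sum>k\<in>{-int n..int n} - {0}. indicator (Iv \<rho> k) u *\<^sub>R Tm K C n \<rho> bn lam k)"

lemma Gf_closed:
  assumes rho: "\<rho> > 0"
  shows "Gf K C n \<rho> bn lam u = (if u \<noteq> 0 \<and> kap \<rho> u \<in> {-int n..int n} - {0} then Tm K C n \<rho> bn lam (kap \<rho> u) else 0)"
proof -
  have "Gf K C n \<rho> bn lam u = (\<Sum>k\<in>{-int n..int n} - {0}. if k = kap \<rho> u then (if u \<noteq> 0 then Tm K C n \<rho> bn lam k else 0) else 0)"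
    unfolding Gf_def
  proof (rule sum.cong[OF refl])
    fix k assume "k \<in> {-int n..int n} - {0}"
    then have "k \<noteq> 0" by simp
    then show "indicator (Iv \<rho> k) u *\<^sub>R Tm K C n \<rho> bn lam k = (if k = kap \<rho> u then (if u \<noteq> 0 then Tm K C n \<rho> bn lam k else 0) else 0)"
      using Iv_iff[OF rho, of k u] by (auto simp: indicator_def)
  qed
  also have "\<dots> = (if u \<noteq> 0 \<and> kap \<rho> u \<in> {-int n..int n} - {0} then Tm K C n \<rho> bn lam (kap \<rho> u) else 0)"
    by (cases "u = 0") (simp_all add: sum.delta)
  finally show ?thesis .
qed

lemma Iv_measure:
  assumes rho: "\<rho> > 0"
  shows "Iv \<rho> k \<in> sets lborel" "emeasure lborel (Iv \<rho> k) < \<infinity>" "measure lborel (Iv \<rho> k) = 1 / \<rho>"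
proof -
  have le1: "(real_of_int k - 1) / \<rho> \<le> real_of_int k / \<rho>" and le2: "real_of_int k / \<rho> \<le> (real_of_int k + 1) / \<rho>"
    using rho by (simp_all add: divide_right_mono)
  show "Iv \<rho> k \<in> sets lborel" by (simp add: Iv_def)
  show "emeasure lborel (Iv \<rho> k) < \<infinity>" using le1 le2 by (simp add: Iv_def)
  show "measure lborel (Iv \<rho> k) = 1 / \<rho>"
  proof (cases "k > 0")
    case True then show ?thesis using le1 by (simp add: Iv_def diff_divide_distrib)
  next
    case False
    have "(real_of_int k + 1) / \<rho> - real_of_int k / \<rho> = 1 / \<rho>" by (simp add: diff_divide_distrib[symmetric])
    then show ?thesis using False le2 by (simp add: Iv_def)
  qed
qed

lemma Gf_integral:
  assumes rho: "\<rho> > 0"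
  shows "integrable lborel (Gf K C n \<rho> bn lam)"
    and "integral\<^sup>L lborel (Gf K C n \<rho> bn lam) = complex_of_real (1 / \<rho>) * (\<Sum>k\<in>{-int n..int n} - {0}. Tm K C n \<rho> bn lam k)"
proof -
  have ik: "integrable lborel (\<lambda>u. indicator (Iv \<rho> k) u *\<^sub>R Tm K C n \<rho> bn lam k)" for k
    using Iv_measure[OF rho, of k] by (intro integrable_scaleR_left) auto
  show "integrable lborel (Gf K C n \<rho> bn lam)"
    unfolding Gf_def[abs_def] by (rule Bochner_Integration.integrable_sum[where f="\<lambda>k u. indicator (Iv \<rho> k) u *\<^sub>R Tm K C n \<rho> bn lam k"]) (rule ik)
  have "integral\<^sup>L lborel (Gf K C n \<rho> bn lam) = (\<Sum>k\<in>{-int n..int n} - {0}. \<integral>u. indicator (Iv \<rho> k) u *\<^sub>R Tm K C n \<rho> bn lam k \<partial>lborel)"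
    unfolding Gf_def[abs_def] by (rule Bochner_Integration.integral_sum[where f="\<lambda>k u. indicator (Iv \<rho> k) u *\<^sub>R Tm K C n \<rho> bn lam k"]) (rule ik)
  also have "\<dots> = (\<Sum>k\<in>{-int n..int n} - {0}. (1 / \<rho>) *\<^sub>R Tm K C n \<rho> bn lam k)"
    using Iv_measure[OF rho] by (intro sum.cong refl) (simp add: integral_scaleR_left)
  also have "\<dots> = complex_of_real (1 / \<rho>) * (\<Sum>k\<in>{-int n..int n} - {0}. Tm K C n \<rho> bn lam k)"
    by (simp add: scaleR_conv_of_real sum_distrib_left)
  finally show "integral\<^sup>L lborel (Gf K C n \<rho> bn lam) = complex_of_real (1 / \<rho>) * (\<Sum>k\<in>{-int n..int n} - {0}. Tm K C n \<rho> bn lam k)" .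
qed

lemma kap_bounds:
  assumes rho: "\<rho> > 0"
  shows "\<bar>real_of_int (kap \<rho> u) - u * \<rho>\<bar> \<le> 1"
    and "u \<noteq> 0 \<Longrightarrow> kap \<rho> u \<noteq> 0"
    and "\<bar>u\<bar> \<le> \<bar>real_of_int (kap \<rho> u) / \<rho>\<bar>"
proof -
  show "\<bar>real_of_int (kap \<rho> u) - u * \<rho>\<bar> \<le> 1"
    unfolding kap_def by (cases "u > 0") (simp_all, linarith+)
  show "u \<noteq> 0 \<Longrightarrow> kap \<rho> u \<noteq> 0"
  proof -
    assume u: "u \<noteq> 0"
    show "kap \<rho> u \<noteq> 0"
    proof (cases "u > 0")
      case True
      then have "u * \<rho> > 0" using rho by simp
      then show ?thesis using True unfolding kap_def by (metis zero_less_ceiling less_irrefl)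
    next
      case False
      then have "u * \<rho> < 0" using rho u by (simp add: mult_less_0_iff)
      then show ?thesis using False unfolding kap_def by (metis floor_less_zero less_irrefl)
    qed
  qed
  show "\<bar>u\<bar> \<le> \<bar>real_of_int (kap \<rho> u) / \<rho>\<bar>"
  proof (cases "u > 0")
    case True
    have "u * \<rho> \<le> real_of_int \<lceil>u * \<rho>\<rceil>" by (rule le_of_int_ceiling)
    then have "u \<le> real_of_int \<lceil>u * \<rho>\<rceil> / \<rho>" using rho by (simp add: pos_le_divide_eq)
    moreover have "real_of_int \<lceil>u * \<rho>\<rceil> / \<rho> \<le> \<bar>real_of_int \<lceil>u * \<rho>\<rceil> / \<rho>\<bar>" by (rule abs_ge_self)
    ultimately show ?thesis using True unfolding kap_def by simp
  next
    case False
    have "real_of_int \<lfloor>u * \<rho>\<rfloor> \<le> u * \<rho>" by (rule of_int_floor_le)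
    then have "real_of_int \<lfloor>u * \<rho>\<rfloor> / \<rho> \<le> u" using rho by (simp add: pos_divide_le_eq)
    moreover have "- (real_of_int \<lfloor>u * \<rho>\<rfloor> / \<rho>) \<le> \<bar>real_of_int \<lfloor>u * \<rho>\<rfloor> / \<rho>\<bar>" by linarith
    ultimately show ?thesis using False unfolding kap_def by simp
  qed
qed

lemma Gf_bound:
  assumes rho: "\<rho> > 0" and Kb: "\<And>x. \<bar>K x\<bar> \<le> B"
    and Cg: "\<And>s. \<bar>C s\<bar> \<le> g s" and gmono: "\<And>s t. \<bar>s\<bar> \<le> \<bar>t\<bar> \<Longrightarrow> g t \<le> g s"
  shows "norm (Gf K C n \<rho> bn lam u) \<le> B * g u"
proof -
  have B0: "0 \<le> B" using Kb[of 0] by linarith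
  have g0: "0 \<le> g u" using Cg[of u] by linarith
  show ?thesis
  proof (cases "u \<noteq> 0 \<and> kap \<rho> u \<in> {-int n..int n} - {0}")
    case False
    then have "Gf K C n \<rho> bn lam u = 0" using Gf_closed[OF rho] by presburger
    then show ?thesis using B0 g0 by simp
  next
    case True
    define k where "k = kap \<rho> u"
    have k: "k \<noteq> 0" "\<bar>k\<bar> \<le> int n" using True k_def by auto
    have npos: "real n > 0" using k by linarith
    have w1: "\<bar>1 - \<bar>real_of_int k\<bar> / real n\<bar> \<le> 1"
    proof -
      have "\<bar>real_of_int k\<bar> \<le> real n" using k(2) by linarith
      then have "\<bar>real_of_int k\<bar> / real n \<le> 1" using npos by simp
      moreover have "0 \<le> \<bar>real_of_int k\<bar> / real n" using npos by simp
      ultimately show ?thesis by linarith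
    qed
    have cb: "\<bar>C (real_of_int k / \<rho>)\<bar> \<le> g u"
      using Cg[of "real_of_int k / \<rho>"] gmono[OF kap_bounds(3)[OF rho, of u]] unfolding k_def by linarith
    have "norm (Gf K C n \<rho> bn lam u) = norm (Tm K C n \<rho> bn lam k)"
      using Gf_closed[OF rho] True k_def by simp
    also have "\<dots> = \<bar>1 - \<bar>real_of_int k\<bar> / real n\<bar> * \<bar>K (bn * real_of_int k)\<bar> * \<bar>C (real_of_int k / \<rho>)\<bar>"
      unfolding Tm_def norm_mult norm_of_real norm_cis abs_mult by simp
    also have "\<dots> \<le> 1 * B * g u"
      by (intro mult_mono w1 Kb cb) (simp_all add: B0)
    finally show ?thesis by simp
  qed
qed

lemma Gf_pointwise:
  assumes Ccont: "\<And>x. isCont C x" and Kcont: "\<And>x. isCont K x" and K0: "K 0 = 1"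
    and rpos: "\<And>m. r m > 0"
    and Q: "filterlim (\<lambda>m. real (N m) / r m) at_top sequentially"
    and R: "filterlim r at_top sequentially"
    and RB: "(\<lambda>m. r m * bb m) \<longlonglongrightarrow> 0"
    and L: "lm \<longlonglongrightarrow> ls" and u: "u \<noteq> 0"
  shows "(\<lambda>m. Gf K C (N m) (r m) (bb m) (lm m) u) \<longlonglongrightarrow> complex_of_real (C u) * cis (- (u * ls))"
proof -
  define \<kappa> where "\<kappa> m = kap (r m) u" for m
  define v where "v m = real_of_int (\<kappa> m) / r m" for m
  have rinv: "(\<lambda>m. inverse (r m)) \<longlonglongrightarrow> 0" by (rule tendsto_inverse_0_at_top[OF R])
  have Qi: "(\<lambda>m. inverse (real (N m) / r m)) \<longlonglongrightarrow> 0" by (rule tendsto_inverse_0_at_top[OF Q])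
  have vlim: "v \<longlonglongrightarrow> u"
  proof (rule LIM_zero_cancel, rule Lim_null_comparison)
    show "\<forall>\<^sub>F m in sequentially. norm (v m - u) \<le> inverse (r m)"
    proof (intro always_eventually allI)
      fix m
      have rm: "r m > 0" by (rule rpos)
      have "v m - u = (real_of_int (\<kappa> m) - u * r m) / r m" using rm unfolding v_def by (simp add: field_simps)
      then have "norm (v m - u) = \<bar>real_of_int (\<kappa> m) - u * r m\<bar> / r m" using rm by simp
      also have "\<dots> \<le> 1 / r m" using kap_bounds(1)[OF rm, of u] rm unfolding \<kappa>_def by (simp add: divide_right_mono)
      finally show "norm (v m - u) \<le> inverse (r m)" by (simp add: inverse_eq_divide)
    qed
    show "(\<lambda>m. inverse (r m)) \<longlonglongrightarrow> 0" by (rule rinv)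
  qed
  define T' where "T' m = complex_of_real ((1 - \<bar>v m\<bar> * inverse (real (N m) / r m)) * K ((r m * bb m) * v m) * C (v m)) * cis (- (v m * lm m))" for m
  have ev: "eventually (\<lambda>m. T' m = Gf K C (N m) (r m) (bb m) (lm m) u) sequentially"
  proof -
    have e1: "eventually (\<lambda>m. real (N m) / r m \<ge> \<bar>u\<bar> + 1) sequentially" using Q by (simp add: filterlim_at_top)
    have e2: "eventually (\<lambda>m. r m \<ge> 1) sequentially" using R by (simp add: filterlim_at_top)
    show ?thesis using e1 e2
    proof eventually_elim
      case (elim m)
      have rm: "r m > 0" by (rule rpos)
      have kne: "\<kappa> m \<noteq> 0" using kap_bounds(2)[OF rm u] \<kappa>_def by simp
      have t1: "\<bar>real_of_int (\<kappa> m)\<bar> \<le> \<bar>real_of_int (\<kappa> m) - u * r m\<bar> + \<bar>u * r m\<bar>"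
        using abs_triangle_ineq[of "real_of_int (\<kappa> m) - u * r m" "u * r m"] by simp
      have t2: "\<bar>u * r m\<bar> = \<bar>u\<bar> * r m" using rm by (simp add: abs_mult)
      have t3: "\<bar>real_of_int (\<kappa> m) - u * r m\<bar> \<le> 1" using kap_bounds(1)[OF rm, of u] unfolding \<kappa>_def .
      have t4: "(\<bar>u\<bar> + 1) * r m \<le> real (N m)" using elim(1) rm by (simp add: pos_le_divide_eq)
      have t5: "\<bar>u\<bar> * r m + 1 \<le> (\<bar>u\<bar> + 1) * r m" using elim(2) by (simp add: algebra_simps)
      have "real_of_int \<bar>\<kappa> m\<bar> \<le> real_of_int (int (N m))" using t1 t2 t3 t4 t5 by simp
      then have kN: "\<bar>\<kappa> m\<bar> \<le> int (N m)" by linarith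
      have inA: "u \<noteq> 0 \<and> kap (r m) u \<in> {-int (N m)..int (N m)} - {0}"
        using u kne kN unfolding \<kappa>_def by auto
      have a1: "\<bar>real_of_int (\<kappa> m)\<bar> / real (N m) = \<bar>v m\<bar> * inverse (real (N m) / r m)"
        using rm unfolding v_def by (simp add: field_simps abs_div)
      have a2: "bb m * real_of_int (\<kappa> m) = (r m * bb m) * v m" using rm unfolding v_def by simp
      have a3: "real_of_int (\<kappa> m) * lm m / r m = v m * lm m" unfolding v_def by simp
      have "Gf K C (N m) (r m) (bb m) (lm m) u = Tm K C (N m) (r m) (bb m) (lm m) (\<kappa> m)"
        using Gf_closed[OF rm] inA unfolding \<kappa>_def by presburger
      also have "\<dots> = T' m" unfolding Tm_def T'_def a1 a2 a3 v_def[symmetric] ..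
      finally show ?case by simp
    qed
  qed
  have "T' \<longlonglongrightarrow> complex_of_real ((1 - \<bar>u\<bar> * 0) * K ((0 * u)) * C u) * cis (- (u * ls))"
    unfolding T'_def
    by (intro tendsto_intros vlim Qi RB L isCont_tendsto_compose[OF Kcont] isCont_tendsto_compose[OF Ccont])
  then have "T' \<longlonglongrightarrow> complex_of_real (C u) * cis (- (u * ls))" using K0 by simp
  then show ?thesis using ev by (rule Lim_transform_eventually)
qed

lemma core:
  fixes C K g :: "real \<Rightarrow> real" and N :: "nat \<Rightarrow> nat" and r bb lm :: "nat \<Rightarrow> real"
  assumes Ccont: "\<And>x. isCont C x"
    and g_int: "integrable lborel g"
    and Cg: "\<And>s. \<bar>C s\<bar> \<le> g s"
    and gmono: "\<And>s t. \<bar>s\<bar> \<le> \<bar>t\<bar> \<Longrightarrow> g t \<le> g s"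
    and Kcont: "\<And>x. isCont K x" and K0: "K 0 = 1" and Kb: "\<And>x. \<bar>K x\<bar> \<le> B"
    and rpos: "\<And>m. r m > 0" and bpos: "\<And>m. bb m > 0"
    and NB: "filterlim (\<lambda>m. real (N m) * bb m) at_top sequentially"
    and R: "filterlim r at_top sequentially"
    and RB: "(\<lambda>m. r m * bb m) \<longlonglongrightarrow> 0"
    and L: "lm \<longlonglongrightarrow> ls"
  shows "(\<lambda>m. complex_of_real (1 / (2 * pi * r m)) * (\<Sum>k\<in>{-int (N m)..int (N m)}. Tm K C (N m) (r m) (bb m) (lm m) k)
            - spec_density C (lm m)) \<longlonglongrightarrow> 0"
proof -
  have Q: "filterlim (\<lambda>m. real (N m) / r m) at_top sequentially"
  proof -
    have "filterlim (\<lambda>m. inverse (r m * bb m)) at_top sequentially"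
      using RB by (rule filterlim_inverse_at_top) (simp add: rpos bpos)
    then have "filterlim (\<lambda>m. real (N m) * bb m * inverse (r m * bb m)) at_top sequentially"
      by (rule filterlim_at_top_mult_at_top[OF NB])
    moreover have "(\<lambda>m. real (N m) * bb m * inverse (r m * bb m)) = (\<lambda>m. real (N m) / r m)"
    proof
      fix m show "real (N m) * bb m * inverse (r m * bb m) = real (N m) / r m"
        using bpos[of m] rpos[of m] by (simp add: field_simps)
    qed
    ultimately show ?thesis by simp
  qed
  define H where "H u = complex_of_real (C u) * cis (- (u * ls))" for u
  define G where "G m = Gf K C (N m) (r m) (bb m) (lm m)" for m
  have Cc: "continuous_on UNIV C" by (simp add: Ccont continuous_at_imp_continuous_on)
  have Hc: "continuous_on UNIV H" unfolding H_def by (intro continuous_intros Cc)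
  have Hm: "H \<in> borel_measurable lborel"
    using borel_measurable_continuous_onI[OF Hc] by simp
  have Cm: "C \<in> borel_measurable lborel"
    using borel_measurable_continuous_onI[OF Cc] by simp
  have lim1: "(\<lambda>m. integral\<^sup>L lborel (G m)) \<longlonglongrightarrow> integral\<^sup>L lborel H"
  proof (rule integral_dominated_convergence[where w="\<lambda>u. B * g u"])
    show "H \<in> borel_measurable lborel" by (rule Hm)
    show "G m \<in> borel_measurable lborel" for m
      unfolding G_def using Gf_integral(1)[OF rpos] by (rule borel_measurable_integrable)
    show "integrable lborel (\<lambda>u. B * g u)" using g_int by simp
    show "AE u in lborel. (\<lambda>m. G m u) \<longlonglongrightarrow> H u"
      using AE_lborel_singleton[of 0]
    proof eventually_elim
      case (elim u)
      then show ?case unfolding G_def H_def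
        by (rule Gf_pointwise[OF Ccont Kcont K0 rpos Q R RB L])
    qed
    show "AE u in lborel. norm (G m u) \<le> B * g u" for m
      unfolding G_def by (intro AE_I2 Gf_bound[OF rpos Kb Cg gmono])
  qed
  have lim2: "(\<lambda>m. \<integral>t. complex_of_real (C t) * cis (- (t * lm m)) \<partial>lborel) \<longlonglongrightarrow> integral\<^sup>L lborel H"
  proof (rule integral_dominated_convergence[where w="g"])
    show "H \<in> borel_measurable lborel" by (rule Hm)
    show "(\<lambda>t. complex_of_real (C t) * cis (- (t * lm m))) \<in> borel_measurable lborel" for m
    proof -
      have "continuous_on UNIV (\<lambda>t. complex_of_real (C t) * cis (- (t * lm m)))"
        by (intro continuous_intros Cc)
      from borel_measurable_continuous_onI[OF this] show ?thesis by simp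
    qed
    show "integrable lborel g" by (rule g_int)
    show "AE t in lborel. (\<lambda>m. complex_of_real (C t) * cis (- (t * lm m))) \<longlonglongrightarrow> H t"
      unfolding H_def by (intro AE_I2 tendsto_intros L)
    show "AE t in lborel. norm (complex_of_real (C t) * cis (- (t * lm m))) \<le> g t" for m
      by (intro AE_I2) (simp add: norm_mult Cg)
  qed
  have eq: "complex_of_real (1 / (2 * pi * r m)) * (\<Sum>k\<in>{-int (N m)..int (N m)}. Tm K C (N m) (r m) (bb m) (lm m) k)
      = complex_of_real (1 / (2 * pi)) * (complex_of_real (C 0 * inverse (r m)) + integral\<^sup>L lborel (G m))" for m
  proof -
    have rm: "r m > 0" by (rule rpos)
    have "(\<Sum>k\<in>{-int (N m)..int (N m)}. Tm K C (N m) (r m) (bb m) (lm m) k)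
        = Tm K C (N m) (r m) (bb m) (lm m) 0 + (\<Sum>k\<in>{-int (N m)..int (N m)} - {0}. Tm K C (N m) (r m) (bb m) (lm m) k)"
      by (subst sum.remove[of _ 0]) auto
    also have "Tm K C (N m) (r m) (bb m) (lm m) 0 = complex_of_real (C 0)"
      unfolding Tm_def using K0 by simp
    finally have s: "(\<Sum>k\<in>{-int (N m)..int (N m)}. Tm K C (N m) (r m) (bb m) (lm m) k)
        = complex_of_real (C 0) + (\<Sum>k\<in>{-int (N m)..int (N m)} - {0}. Tm K C (N m) (r m) (bb m) (lm m) k)" .
    show ?thesis unfolding s G_def Gf_integral(2)[OF rm] using rm
      by (simp add: field_simps)
  qed
  have lim3: "(\<lambda>m. complex_of_real (C 0 * inverse (r m))) \<longlonglongrightarrow> 0"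
  proof -
    have "(\<lambda>m. C 0 * inverse (r m)) \<longlonglongrightarrow> C 0 * 0"
      by (rule tendsto_mult[OF tendsto_const tendsto_inverse_0_at_top[OF R]])
    then have "(\<lambda>m. complex_of_real (C 0 * inverse (r m))) \<longlonglongrightarrow> complex_of_real (C 0 * 0)"
      by (rule tendsto_of_real)
    then show ?thesis by simp
  qed
  have "(\<lambda>m. complex_of_real (1 / (2 * pi)) * (complex_of_real (C 0 * inverse (r m)) + integral\<^sup>L lborel (G m))
      - complex_of_real (1 / (2 * pi)) * (\<integral>t. complex_of_real (C t) * cis (- (t * lm m)) \<partial>lborel))
      \<longlonglongrightarrow> complex_of_real (1 / (2 * pi)) * (0 + integral\<^sup>L lborel H) - complex_of_real (1 / (2 * pi)) * integral\<^sup>L lborel H"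
    by (intro tendsto_intros lim1 lim2 lim3)
  then show ?thesis unfolding eq spec_density_def by simp
qed

lemma absmul_le:
  fixes x y c :: real
  assumes c: "c > 0"
  shows "\<bar>x * y\<bar> \<le> (c * x\<^sup>2 + y\<^sup>2 / c) / 2"
proof -
  have e: "(c * \<bar>x\<bar> - \<bar>y\<bar>)\<^sup>2 = c\<^sup>2 * x\<^sup>2 - 2 * c * (\<bar>x\<bar> * \<bar>y\<bar>) + y\<^sup>2"
    by (simp add: power2_diff power_mult_distrib mult.assoc)
  have h: "2 * (\<bar>x\<bar> * \<bar>y\<bar>) * c \<le> c\<^sup>2 * x\<^sup>2 + y\<^sup>2"
  proof -
    have "2 * (\<bar>x\<bar> * \<bar>y\<bar>) * c = 2 * c * (\<bar>x\<bar> * \<bar>y\<bar>)" by (simp only: mult_ac)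
    then show ?thesis using zero_le_power2[of "c * \<bar>x\<bar> - \<bar>y\<bar>"] unfolding e by linarith
  qed
  have "(c\<^sup>2 * x\<^sup>2 + y\<^sup>2) / c = c * x\<^sup>2 + y\<^sup>2 / c"
    using c by (simp add: add_divide_distrib power2_eq_square)
  moreover have "2 * (\<bar>x\<bar> * \<bar>y\<bar>) \<le> (c\<^sup>2 * x\<^sup>2 + y\<^sup>2) / c"
    using h c by (simp add: pos_le_divide_eq)
  ultimately show ?thesis by (simp add: abs_mult)
qed
lemma proc_sq_integrable:
  assumes proc: "stationary_process M r X" and a: "a \<in> {1..r}"
  shows "integrable M (\<lambda>\<omega>. (X a s \<omega>)\<^sup>2)"
  using proc a unfolding stationary_process_def by auto

lemma cov_bound:
  assumes proc: "stationary_process M r X" and a1: "a1 \<in> {1..r}" and a2: "a2 \<in> {1..r}"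
  shows "\<bar>cross_cov M X a1 a2 s\<bar> \<le> (cross_cov M X a1 a1 0 + cross_cov M X a2 a2 0) / 2"
proof -
  have "\<bar>cross_cov M X a1 a2 s\<bar> = norm (\<integral>\<omega>. X a1 s \<omega> * X a2 0 \<omega> \<partial>M)" by (simp add: cross_cov_def)
  also have "\<dots> \<le> (\<integral>\<omega>. norm (X a1 s \<omega> * X a2 0 \<omega>) \<partial>M)" by (rule integral_norm_bound)
  also have "\<dots> \<le> (\<integral>\<omega>. (1 * (X a1 s \<omega>)\<^sup>2 + (X a2 0 \<omega>)\<^sup>2 / 1) / 2 \<partial>M)"
  proof (rule integral_mono)
    show "integrable M (\<lambda>\<omega>. norm (X a1 s \<omega> * X a2 0 \<omega>))" using proc_integrable[OF proc a1 a2] by simp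
    show "integrable M (\<lambda>\<omega>. (1 * (X a1 s \<omega>)\<^sup>2 + (X a2 0 \<omega>)\<^sup>2 / 1) / 2)"
      using proc_sq_integrable[OF proc a1] proc_sq_integrable[OF proc a2] by simp
    show "norm (X a1 s \<omega> * X a2 0 \<omega>) \<le> (1 * (X a1 s \<omega>)\<^sup>2 + (X a2 0 \<omega>)\<^sup>2 / 1) / 2" for \<omega>
      using absmul_le[of 1] by simp
  qed
  also have "\<dots> = ((\<integral>\<omega>. (X a1 s \<omega>)\<^sup>2 \<partial>M) + (\<integral>\<omega>. (X a2 0 \<omega>)\<^sup>2 \<partial>M)) / 2"
    using proc_sq_integrable[OF proc a1] proc_sq_integrable[OF proc a2] by simp
  also have "\<dots> = (cross_cov M X a1 a1 0 + cross_cov M X a2 a2 0) / 2"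
    using proc_cov[OF proc a1 a1, of s s] proc_cov[OF proc a2 a2, of 0 0] by (simp add: power2_eq_square)
  finally show ?thesis .
qed

lemma cov_cont:
  assumes proc: "stationary_process M r X" and a1: "a1 \<in> {1..r}" and a2: "a2 \<in> {1..r}"
  shows "isCont (cross_cov M X a1 a2) t"
proof -
  define C where "C = cross_cov M X a1 a2"
  define D where "D s = (\<integral>\<omega>. (X a1 s \<omega> - X a1 t \<omega>)\<^sup>2 \<partial>M)" for s
  define V where "V = (\<integral>\<omega>. (X a2 0 \<omega>)\<^sup>2 \<partial>M)"
  have D0: "(D \<longlongrightarrow> 0) (at t)" using proc a1 unfolding stationary_process_def D_def by blast
  have V0: "V \<ge> 0" unfolding V_def by simp
  have intD: "integrable M (\<lambda>\<omega>. (X a1 s \<omega> - X a1 t \<omega>)\<^sup>2)" for s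
  proof -
    have "integrable M (\<lambda>\<omega>. (X a1 s \<omega>)\<^sup>2 - 2 * (X a1 s \<omega> * X a1 t \<omega>) + (X a1 t \<omega>)\<^sup>2)"
      using proc_sq_integrable[OF proc a1] proc_integrable[OF proc a1 a1] by simp
    moreover have "(\<lambda>\<omega>. (X a1 s \<omega> - X a1 t \<omega>)\<^sup>2) = (\<lambda>\<omega>. (X a1 s \<omega>)\<^sup>2 - 2 * (X a1 s \<omega> * X a1 t \<omega>) + (X a1 t \<omega>)\<^sup>2)"
      by (rule ext) (simp add: power2_eq_square algebra_simps)
    ultimately show ?thesis by simp
  qed
  have key: "\<bar>C s - C t\<bar> \<le> (c * D s + V / c) / 2" if c: "c > 0" for s c
  proof -
    have "C s - C t = (\<integral>\<omega>. X a1 s \<omega> * X a2 0 \<omega> \<partial>M) - (\<integral>\<omega>. X a1 t \<omega> * X a2 0 \<omega> \<partial>M)"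
      by (simp add: C_def cross_cov_def)
    also have "\<dots> = (\<integral>\<omega>. (X a1 s \<omega> - X a1 t \<omega>) * X a2 0 \<omega> \<partial>M)"
      using proc_integrable[OF proc a1 a2] by (simp add: left_diff_distrib)
    finally have "\<bar>C s - C t\<bar> = norm (\<integral>\<omega>. (X a1 s \<omega> - X a1 t \<omega>) * X a2 0 \<omega> \<partial>M)" by simp
    also have "\<dots> \<le> (\<integral>\<omega>. norm ((X a1 s \<omega> - X a1 t \<omega>) * X a2 0 \<omega>) \<partial>M)" by (rule integral_norm_bound)
    also have "\<dots> \<le> (\<integral>\<omega>. (c * (X a1 s \<omega> - X a1 t \<omega>)\<^sup>2 + (X a2 0 \<omega>)\<^sup>2 / c) / 2 \<partial>M)"
    proof (rule integral_mono)
      show "integrable M (\<lambda>\<omega>. norm ((X a1 s \<omega> - X a1 t \<omega>) * X a2 0 \<omega>))"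
        using proc_integrable[OF proc a1 a2] by (simp add: left_diff_distrib)
      show "integrable M (\<lambda>\<omega>. (c * (X a1 s \<omega> - X a1 t \<omega>)\<^sup>2 + (X a2 0 \<omega>)\<^sup>2 / c) / 2)"
        using intD proc_sq_integrable[OF proc a2] by simp
      show "norm ((X a1 s \<omega> - X a1 t \<omega>) * X a2 0 \<omega>) \<le> (c * (X a1 s \<omega> - X a1 t \<omega>)\<^sup>2 + (X a2 0 \<omega>)\<^sup>2 / c) / 2" for \<omega>
        using absmul_le[OF c] by simp
    qed
    also have "\<dots> = (c * D s + V / c) / 2"
      using intD proc_sq_integrable[OF proc a2] by (simp add: D_def V_def)
    finally show ?thesis .
  qed
  have "(C \<longlongrightarrow> C t) (at t)"
  proof (rule tendstoI)
    fix e :: real assume e: "e > 0"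
    define c where "c = V / e + 1"
    have c: "c > 0" using V0 e by (simp add: c_def add_nonneg_pos)
    have Vc: "V / c < e"
    proof -
      have "V < e * c" using e unfolding c_def by (simp add: field_simps)
      then show ?thesis using c by (simp add: divide_less_eq mult.commute)
    qed
    have "eventually (\<lambda>s. dist (D s) 0 < e / c) (at t)"
      using D0 c e by (simp add: tendsto_iff)
    then show "eventually (\<lambda>s. dist (C s) (C t) < e) (at t)"
    proof eventually_elim
      case (elim s)
      then have "\<bar>D s\<bar> < e / c" by simp
      then have "c * D s < e" using c by (simp add: field_simps abs_less_iff)
      then have "(c * D s + V / c) / 2 < e" using Vc by simp
      then show ?case using key[OF c, of s] by (simp add: dist_real_def)
    qed
  qed
  then show ?thesis unfolding C_def isCont_def .
qed

theorem theorem1: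
  fixes M :: "'w measure" and r :: nat and X :: "nat \<Rightarrow> real \<Rightarrow> 'w \<Rightarrow> real"
    and K :: "real \<Rightarrow> real" and b \<rho> :: "nat \<Rightarrow> real"
    and a1 a2 :: nat and lam_l lam_u :: real
  assumes proc: "stationary_process M r X"
    and A1: "assumption1 r (cross_cov M X)"
    and A2: "assumption2 K"
    and bpos: "\<forall>n. b n > 0" and rhopos: "\<forall>n. \<rho> n > 0"
    and A3: "filterlim (\<lambda>n. real n * b n) at_top sequentially"
    and A4a: "filterlim \<rho> at_top sequentially"
    and A4b: "(\<lambda>n. \<rho> n * b n) \<longlonglongrightarrow> 0"
    and a1: "a1 \<in> {1..r}" and a2: "a2 \<in> {1..r}"
  shows "\<forall>\<epsilon>>0. \<forall>\<^sub>F n in sequentially. \<forall>lam\<in>{lam_l..lam_u}.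
           cmod ((\<integral>\<omega>. spec_estimator K (b n) (\<rho> n) n X a1 a2 lam \<omega> \<partial>M)
                 - spec_density (cross_cov M X a1 a2) lam) < \<epsilon>"
proof (intro allI impI)
  fix \<epsilon> :: real assume \<epsilon>: "\<epsilon> > 0"
  define C where "C = cross_cov M X a1 a2"
  define g where "g t = (SUP s\<in>{s. \<bar>s\<bar> \<ge> \<bar>t\<bar>}. \<bar>C s\<bar>)" for t
  define Bc where "Bc = (cross_cov M X a1 a1 0 + cross_cov M X a2 a2 0) / 2"
  have Cb: "\<bar>C s\<bar> \<le> Bc" for s unfolding C_def Bc_def by (rule cov_bound[OF proc a1 a2])
  have bdd: "bdd_above ((\<lambda>s. \<bar>C s\<bar>) ` A)" for A using Cb by (auto intro!: bdd_aboveI)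
  have Ccont: "isCont C x" for x unfolding C_def by (rule cov_cont[OF proc a1 a2])
  have g_int: "integrable lborel g" using A1 a1 a2 unfolding assumption1_def g_def C_def by blast
  have Cg: "\<bar>C s\<bar> \<le> g s" for s unfolding g_def by (rule cSUP_upper[OF _ bdd]) simp
  have gmono: "g t \<le> g s" if "\<bar>s\<bar> \<le> \<bar>t\<bar>" for s t
    unfolding g_def using that by (intro cSUP_subset_mono bdd) auto
  from A2 obtain K1 where K1: "\<And>x. K1 x \<ge> 0" "\<And>x. x \<noteq> 0 \<Longrightarrow> K1 x < K1 0" "\<And>x. \<bar>K x\<bar> \<le> K1 x"
    and Kc: "continuous_on UNIV K" and K0: "K 0 = 1"
    unfolding assumption2_def by blast
  have Kb: "\<bar>K x\<bar> \<le> K1 0" for x using K1(2,3)[of x] by (cases "x = 0") force+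
  have Kcont: "isCont K x" for x using Kc by (simp add: continuous_on_eq_continuous_at)
  define err where "err n lam = cmod ((\<integral>\<omega>. spec_estimator K (b n) (\<rho> n) n X a1 a2 lam \<omega> \<partial>M) - spec_density C lam)" for n lam
  show "\<forall>\<^sub>F n in sequentially. \<forall>lam\<in>{lam_l..lam_u}.
           cmod ((\<integral>\<omega>. spec_estimator K (b n) (\<rho> n) n X a1 a2 lam \<omega> \<partial>M)
                 - spec_density (cross_cov M X a1 a2) lam) < \<epsilon>"
  proof (rule ccontr)
    assume nev: "\<not> ?thesis"
    have "frequently (\<lambda>n. \<exists>lam\<in>{lam_l..lam_u}. \<not> err n lam < \<epsilon>) sequentially"
      using nev unfolding not_eventually err_def C_def by simp
    then have "infinite {n. \<exists>lam\<in>{lam_l..lam_u}. \<not> err n lam < \<epsilon>}"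
      by (simp add: frequently_cofinite[symmetric] cofinite_eq_sequentially)
    then obtain \<sigma> :: "nat \<Rightarrow> nat" where \<sigma>: "strict_mono \<sigma>" and \<sigma>P: "\<And>m. \<sigma> m \<in> {n. \<exists>lam\<in>{lam_l..lam_u}. \<not> err n lam < \<epsilon>}"
      using infinite_enumerate by blast
    then have "\<forall>m. \<exists>lam. lam \<in> {lam_l..lam_u} \<and> \<not> err (\<sigma> m) lam < \<epsilon>" by blast
    then obtain lf where lf: "\<And>m. lf m \<in> {lam_l..lam_u}" "\<And>m. \<not> err (\<sigma> m) (lf m) < \<epsilon>" by metis
    have "seq_compact {lam_l..lam_u}" by (rule compact_imp_seq_compact[OF compact_Icc])
    then obtain ls \<phi> where ls: "ls \<in> {lam_l..lam_u}" and \<phi>: "strict_mono (\<phi> :: nat \<Rightarrow> nat)"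
      and lim: "(lf \<circ> \<phi>) \<longlonglongrightarrow> ls"
      using lf(1) by (metis seq_compactE)
    define \<tau> where "\<tau> = \<sigma> \<circ> \<phi>"
    have \<tau>: "strict_mono \<tau>" unfolding \<tau>_def using \<sigma> \<phi> by (rule strict_mono_o)
    have \<tau>lim: "filterlim \<tau> at_top sequentially" by (rule filterlim_subseq[OF \<tau>])
    have core_lim: "(\<lambda>m. complex_of_real (1 / (2 * pi * \<rho> (\<tau> m))) * (\<Sum>k\<in>{-int (\<tau> m)..int (\<tau> m)}. Tm K C (\<tau> m) (\<rho> (\<tau> m)) (b (\<tau> m)) ((lf \<circ> \<phi>) m) k)
            - spec_density C ((lf \<circ> \<phi>) m)) \<longlonglongrightarrow> 0"
    proof (rule core[OF Ccont g_int Cg gmono Kcont K0 Kb])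
      show "\<And>m. \<rho> (\<tau> m) > 0" using rhopos by simp
      show "\<And>m. b (\<tau> m) > 0" using bpos by simp
      show "filterlim (\<lambda>m. real (\<tau> m) * b (\<tau> m)) at_top sequentially"
        by (rule filterlim_compose[OF A3 \<tau>lim])
      show "filterlim (\<lambda>m. \<rho> (\<tau> m)) at_top sequentially"
        by (rule filterlim_compose[OF A4a \<tau>lim])
      show "(\<lambda>m. \<rho> (\<tau> m) * b (\<tau> m)) \<longlonglongrightarrow> 0"
        using LIMSEQ_subseq_LIMSEQ[OF A4b \<tau>] by (simp add: o_def)
      show "(lf \<circ> \<phi>) \<longlonglongrightarrow> ls" by (rule lim)
    qed
    have ev1: "eventually (\<lambda>m. norm (complex_of_real (1 / (2 * pi * \<rho> (\<tau> m))) * (\<Sum>k\<in>{-int (\<tau> m)..int (\<tau> m)}. Tm K C (\<tau> m) (\<rho> (\<tau> m)) (b (\<tau> m)) ((lf \<circ> \<phi>) m) k)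
            - spec_density C ((lf \<circ> \<phi>) m)) < \<epsilon>) sequentially"
      using core_lim \<epsilon> by (simp add: tendsto_iff dist_norm)
    have ev2: "eventually (\<lambda>m. \<rho> (\<tau> m) \<ge> (\<bar>lam_l\<bar> + \<bar>lam_u\<bar>) / pi) sequentially"
      using filterlim_compose[OF A4a \<tau>lim] by (simp add: filterlim_at_top)
    have ev3: "eventually (\<lambda>m. m \<ge> 1) sequentially" by (rule eventually_ge_at_top)
    from ev1 ev2 ev3 have "eventually (\<lambda>m. False) sequentially"
    proof eventually_elim
      case (elim m)
      define n where "n = \<tau> m"
      define lam where "lam = lf (\<phi> m)"
      have n1: "n \<ge> 1" using elim(3) seq_suble[OF \<tau>, of m] unfolding n_def by linarith
      have lamI: "lam \<in> {lam_l..lam_u}" unfolding lam_def by (rule lf(1))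
      have "\<bar>lam\<bar> \<le> \<bar>lam_l\<bar> + \<bar>lam_u\<bar>" using lamI by auto
      also have "\<dots> \<le> pi * \<rho> n" using elim(2) unfolding n_def by (simp add: pos_divide_le_eq mult.commute)
      finally have lr: "- pi * \<rho> n \<le> lam" "lam \<le> pi * \<rho> n" by linarith+
      have "err n lam = norm (complex_of_real (1 / (2 * pi * \<rho> n)) * (\<Sum>k\<in>{-int n..int n}. Tm K C n (\<rho> n) (b n) lam k) - spec_density C lam)"
        unfolding err_def C_def using expect_formula[OF proc a1 a2 n1 rhopos[rule_format] lr] by simp
      then have "err n lam < \<epsilon>" using elim(1) unfolding n_def lam_def by simp
      moreover have "\<not> err n lam < \<epsilon>" using lf(2)[of "\<phi> m"] unfolding n_def lam_def \<tau>_def by simp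
      ultimately show ?case by simp
    qed
    then show False by simp
  qed
qed

end
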